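(* Let $G$ be a finite abelian group, $T \subsetneq G$ a non-empty subset, and fix $x \in G$ with $T + x \ne T$. Put $T^{\uparrow} = T + x$, $C^{\uparrow} = T^{\uparrow}\setminus T$, $C^{\downarrow} = T \setminus T^{\uparrow}$ and $A = T \cup T^{\uparrow}$. Let $d \ge 1$ and suppose that $0 \le i_1, \dots, i_m \le d$ are distinct integers. Then $\left(A^d \setminus (C_{i_1,d}\cup\dots\cup C_{i_m,d})\right)^{\dagger m}$ is a hole in $A^{d+m}$.
   Context: For integers $1 \le i \le e$, $C_{i,e} = C^{\downarrow}\times\dots\times C^{\uparrow}\times\dots\times C^{\downarrow} \subset A^e$ ($e$ factors, $C^{\uparrow}$ in the $i$-th factor, $C^{\downarrow}$ elsewhere), and $C_{0,e} = (C^{\downarrow})^e$. A copy of $T$ in $G^e$ is a translate $\mathsf{T}_j + y$ ($y\in G^e$, $1\le j\le e$), where $\mathsf{T}_j$ is the set of points of $G^e$ with $j$-th coordinate in $T$ and other coordinates $0$; a set is $T$-tilable if it is a disjoint union of copies of $T$. A set $X \subset A^e$ is a hole in $A^e$ if $A^e \setminus X$ is $T$-tilable. For $X \subset A^e$, define $X^{\dagger} = (X \times C^{\downarrow}) \cup C_{e+1,e+1} \subset A^{e+1}$, and for $m \ge 1$ let $X^{\dagger m}$ be the result of $m$ consecutive applications of $\dagger$ (each in the dimension of the current ambient set), a subset of $A^{e+m}$. *)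

theory Defs
  imports Main
begin

text \<open>G is an abelian group type 'a (finite); points of G^e are lists of length e;
  coordinate k (1-based) of the paper is list index k-1.\<close>

definition Tup :: "'a::ab_group_add set \<Rightarrow> 'a \<Rightarrow> 'a set" where
  "Tup T x = (\<lambda>t. t + x) ` T"

definition Cup :: "'a::ab_group_add set \<Rightarrow> 'a \<Rightarrow> 'a set" where
  "Cup T x = Tup T x - T"

definition Cdown :: "'a::ab_group_add set \<Rightarrow> 'a \<Rightarrow> 'a set" where
  "Cdown T x = T - Tup T x"

definition Aset :: "'a::ab_group_add set \<Rightarrow> 'a \<Rightarrow> 'a set" where
  "Aset T x = T \<union> Tup T x"

definition cpow :: "'a set \<Rightarrow> nat \<Rightarrow> 'a list set" where
  "cpow S e = {xs. length xs = e \<and> set xs \<subseteq> S}"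

text \<open>C_{i,e}: C^up in the i-th factor (1-based), C^down elsewhere; i = 0 gives (C^down)^e.\<close>
definition Cset :: "'a::ab_group_add set \<Rightarrow> 'a \<Rightarrow> nat \<Rightarrow> nat \<Rightarrow> 'a list set" where
  "Cset T x i e = {xs. length xs = e \<and>
     (\<forall>k<e. xs ! k \<in> (if k + 1 = i then Cup T x else Cdown T x))}"

definition Tcoord :: "'a::ab_group_add set \<Rightarrow> nat \<Rightarrow> nat \<Rightarrow> 'a list set" where
  "Tcoord T e j = {xs. length xs = e \<and> xs ! (j - 1) \<in> T \<and>
     (\<forall>k<e. k \<noteq> j - 1 \<longrightarrow> xs ! k = 0)}"

definition translate :: "'a::ab_group_add list set \<Rightarrow> 'a list \<Rightarrow> 'a list set" where
  "translate S y = (\<lambda>z. map2 (+) z y) ` S"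

definition copies :: "'a::ab_group_add set \<Rightarrow> nat \<Rightarrow> 'a list set set" where
  "copies T e = {translate (Tcoord T e j) y | j y. 1 \<le> j \<and> j \<le> e \<and> length y = e}"

definition tilable :: "'a::ab_group_add set \<Rightarrow> nat \<Rightarrow> 'a list set \<Rightarrow> bool" where
  "tilable T e X \<longleftrightarrow> (\<exists>P. P \<subseteq> copies T e \<and> pairwise disjnt P \<and> \<Union>P = X)"

definition hole :: "'a::ab_group_add set \<Rightarrow> 'a \<Rightarrow> nat \<Rightarrow> 'a list set \<Rightarrow> bool" where
  "hole T x e X \<longleftrightarrow> X \<subseteq> cpow (Aset T x) e \<and> tilable T e (cpow (Aset T x) e - X)"

definition dagger :: "'a::ab_group_add set \<Rightarrow> 'a \<Rightarrow> nat \<Rightarrow> 'a list set \<Rightarrow> 'a list set" where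
  "dagger T x e X = {xs @ [c] | xs c. xs \<in> X \<and> c \<in> Cdown T x} \<union> Cset T x (e + 1) (e + 1)"

fun dagger_pow :: "'a::ab_group_add set \<Rightarrow> 'a \<Rightarrow> nat \<Rightarrow> nat \<Rightarrow> 'a list set \<Rightarrow> 'a list set" where
  "dagger_pow T x 0 e X = X"
| "dagger_pow T x (Suc m) e X = dagger T x (e + m) (dagger_pow T x m e X)"

end

theory Submission
  imports Defs
begin


lemma copy_char:
  assumes "1 \<le> j" "j \<le> e" "length y = e"
  shows "translate (Tcoord T e j) y = {ys. length ys = e \<and> ys!(j-1) \<in> (\<lambda>t. t + y!(j-1))`T \<and> (\<forall>k<e. k \<noteq> j-1 \<longrightarrow> ys!k = y!k)}"
proof (intro equalityI subsetI)
  fix ys assume "ys \<in> translate (Tcoord T e j) y"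
  then obtain z where z: "z \<in> Tcoord T e j" and ys: "ys = map2 (+) z y"
    unfolding translate_def by auto
  from z have lz: "length z = e" and zj: "z!(j-1) \<in> T" and zk: "\<forall>k<e. k \<noteq> j-1 \<longrightarrow> z!k = 0"
    unfolding Tcoord_def by auto
  have "length ys = e" using ys lz assms by simp
  moreover have "ys!(j-1) = z!(j-1) + y!(j-1)" using ys lz assms by simp
  moreover have "\<forall>k<e. k \<noteq> j-1 \<longrightarrow> ys!k = y!k" using ys lz assms zk by simp
  ultimately show "ys \<in> {ys. length ys = e \<and> ys!(j-1) \<in> (\<lambda>t. t + y!(j-1))`T \<and> (\<forall>k<e. k \<noteq> j-1 \<longrightarrow> ys!k = y!k)}"
    using zj by auto
next
  fix ys assume "ys \<in> {ys. length ys = e \<and> ys!(j-1) \<in> (\<lambda>t. t + y!(j-1))`T \<and> (\<forall>k<e. k \<noteq> j-1 \<longrightarrow> ys!k = y!k)}"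
  then have l: "length ys = e" and yj: "ys!(j-1) \<in> (\<lambda>t. t + y!(j-1))`T" and yk: "\<forall>k<e. k \<noteq> j-1 \<longrightarrow> ys!k = y!k" by auto
  define z where "z = map2 (-) ys y"
  have lz: "length z = e" using l assms z_def by simp
  have "z \<in> Tcoord T e j"
    unfolding Tcoord_def using yj yk l assms by (auto simp: z_def)
  moreover have "ys = map2 (+) z y"
    by (rule nth_equalityI) (use l assms lz in \<open>auto simp: z_def\<close>)
  ultimately show "ys \<in> translate (Tcoord T e j) y" unfolding translate_def by auto
qed

definition line :: "'a::ab_group_add set \<Rightarrow> nat \<Rightarrow> nat \<Rightarrow> 'a \<Rightarrow> 'a list \<Rightarrow> 'a list set" where
  "line T N p z w = {ys. length ys = N \<and> ys!p \<in> (\<lambda>t. t+z)`T \<and> (\<forall>k<N. k\<noteq>p \<longrightarrow> ys!k = w!k)}"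

lemma line_copy:
  assumes "p < N" "length w = N"
  shows "line T N p z w \<in> copies T N"
proof -
  have "line T N p z w = translate (Tcoord T N (Suc p)) (w[p:=z])"
    using copy_char[of "Suc p" N "w[p:=z]" T] assms unfolding line_def by auto
  then show ?thesis unfolding copies_def using assms by force
qed

lemma line_cong:
  assumes "\<forall>k<N. k\<noteq>p \<longrightarrow> w1!k = w2!k"
  shows "line T N p z w1 = line T N p z w2"
  unfolding line_def using assms by metis

lemma line_tilable:
  assumes "p < N" and inv: "\<And>xs ys. length xs = N \<Longrightarrow> length ys = N \<Longrightarrow> (\<forall>k<N. k\<noteq>p \<longrightarrow> xs!k = ys!k) \<Longrightarrow> C xs \<Longrightarrow> C ys"
  shows "tilable T N {xs. length xs = N \<and> C xs \<and> xs!p \<in> (\<lambda>t. t+z)`T}"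
  unfolding tilable_def
proof (intro exI conjI)
  let ?P = "(\<lambda>w. line T N p z w) ` {w. length w = N \<and> C w}"
  show "?P \<subseteq> copies T N"
  proof
    fix Q assume "Q \<in> ?P"
    then obtain w where "Q = line T N p z w" "length w = N" by auto
    then show "Q \<in> copies T N" using line_copy[OF assms(1)] by simp
  qed
  show "pairwise disjnt ?P"
  proof (rule pairwiseI)
    fix a b assume "a \<in> ?P" "b \<in> ?P" "a \<noteq> b"
    then obtain w1 w2 where a: "a = line T N p z w1" and b: "b = line T N p z w2" by auto
    show "disjnt a b"
    proof (rule ccontr)
      assume "\<not> disjnt a b"
      then obtain ys where "ys \<in> a" "ys \<in> b" unfolding disjnt_def by auto
      then have h1: "\<forall>k<N. k\<noteq>p \<longrightarrow> ys!k = w1!k" and h2: "\<forall>k<N. k\<noteq>p \<longrightarrow> ys!k = w2!k"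
        using a b unfolding line_def by blast+
      then have "\<forall>k<N. k\<noteq>p \<longrightarrow> w1!k = w2!k" by metis
      then have "a = b" using a b line_cong by metis
      with \<open>a \<noteq> b\<close> show False by simp
    qed
  qed
  show "\<Union>?P = {xs. length xs = N \<and> C xs \<and> xs!p \<in> (\<lambda>t. t+z)`T}"
  proof (intro equalityI subsetI)
    fix ys assume "ys \<in> \<Union>?P"
    then obtain w where w: "length w = N" "C w" "ys \<in> line T N p z w" by auto
    then have "length ys = N" "\<forall>k<N. k\<noteq>p \<longrightarrow> w!k = ys!k" unfolding line_def by auto
    then have "C ys" using inv[of w ys] w by blast
    then show "ys \<in> {xs. length xs = N \<and> C xs \<and> xs!p \<in> (\<lambda>t. t+z)`T}" using w unfolding line_def by auto
  next
    fix xs assume "xs \<in> {xs. length xs = N \<and> C xs \<and> xs!p \<in> (\<lambda>t. t+z)`T}"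
    then have "xs \<in> line T N p z xs" "length xs = N" "C xs" unfolding line_def by auto
    then show "xs \<in> \<Union>?P" by auto
  qed
qed

lemma tilable_empty: "tilable T e {}"
  unfolding tilable_def by (intro exI[of _ "{}"]) auto

lemma tilable_Un:
  assumes "tilable T e S1" "tilable T e S2" "S1 \<inter> S2 = {}"
  shows "tilable T e (S1 \<union> S2)"
proof -
  obtain P1 where P1: "P1 \<subseteq> copies T e" "pairwise disjnt P1" "\<Union>P1 = S1" using assms(1) unfolding tilable_def by auto
  obtain P2 where P2: "P2 \<subseteq> copies T e" "pairwise disjnt P2" "\<Union>P2 = S2" using assms(2) unfolding tilable_def by auto
  have "pairwise disjnt (P1 \<union> P2)"
  proof (rule pairwiseI)
    fix a b assume ab: "a \<in> P1 \<union> P2" "b \<in> P1 \<union> P2" "a \<noteq> b"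
    have s1: "\<And>q. q \<in> P1 \<Longrightarrow> q \<subseteq> S1" using P1(3) by blast
    have s2: "\<And>q. q \<in> P2 \<Longrightarrow> q \<subseteq> S2" using P2(3) by blast
    show "disjnt a b"
    proof (cases "a \<in> P1")
      case True
      show ?thesis
      proof (cases "b \<in> P1")
        case True
        then show ?thesis using \<open>a \<in> P1\<close> ab(3) P1(2) unfolding pairwise_def by blast
      next
        case False
        then have "b \<in> P2" using ab by blast
        then show ?thesis using s1[OF \<open>a \<in> P1\<close>] s2 assms(3) unfolding disjnt_def by blast
      qed
    next
      case False
      then have a2: "a \<in> P2" using ab by blast
      show ?thesis
      proof (cases "b \<in> P1")
        case True
        then show ?thesis using s1 s2[OF a2] assms(3) unfolding disjnt_def by blast
      next
        case False
        then have "b \<in> P2" using ab by blast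
        then show ?thesis using a2 ab(3) P2(2) unfolding pairwise_def by blast
      qed
    qed
  qed
  moreover have "P1 \<union> P2 \<subseteq> copies T e" using P1(1) P2(1) by blast
  moreover have "\<Union>(P1 \<union> P2) = S1 \<union> S2" using P1(3) P2(3) by blast
  ultimately show ?thesis unfolding tilable_def by blast
qed

definition ext :: "'a list set \<Rightarrow> 'a set \<Rightarrow> 'a list set" where
  "ext S W = {xs @ [c] | xs c. xs \<in> S \<and> c \<in> W}"

lemma copy_ext:
  assumes "Q \<in> copies T e" "c \<in> W"
  shows "(\<lambda>q. q @ [c]) ` Q \<in> copies T (Suc e)"
proof -
  obtain j y where jy: "Q = translate (Tcoord T e j) y" "1 \<le> j" "j \<le> e" "length y = e"
    using assms(1) unfolding copies_def by blast
  have Q: "Q = {ys. length ys = e \<and> ys!(j-1) \<in> (\<lambda>t. t + y!(j-1))`T \<and> (\<forall>k<e. k \<noteq> j-1 \<longrightarrow> ys!k = y!k)}"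
    using copy_char[OF jy(2,3,4)] jy(1) by simp
  have Q2: "translate (Tcoord T (Suc e) j) (y@[c]) = {ys. length ys = Suc e \<and> ys!(j-1) \<in> (\<lambda>t. t + (y@[c])!(j-1))`T \<and> (\<forall>k<Suc e. k \<noteq> j-1 \<longrightarrow> ys!k = (y@[c])!k)}"
    using copy_char[of j "Suc e" "y@[c]" T] jy by simp
  have "(\<lambda>q. q @ [c]) ` Q = translate (Tcoord T (Suc e) j) (y@[c])"
  proof (intro equalityI subsetI)
    fix zs assume "zs \<in> (\<lambda>q. q @ [c]) ` Q"
    then obtain q where q: "q \<in> Q" "zs = q @ [c]" by auto
    have lq: "length q = e" and q1: "q!(j-1) \<in> (\<lambda>t. t + y!(j-1))`T"
      and q2: "\<forall>k<e. k \<noteq> j-1 \<longrightarrow> q!k = y!k" using q(1) unfolding Q by blast+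
    have jl: "j - 1 < e" using jy by auto
    have "zs!(j-1) \<in> (\<lambda>t. t + (y@[c])!(j-1))`T" using q1 q(2) lq jl jy(2-4) by (simp add: nth_append)
    moreover have "\<forall>k<Suc e. k \<noteq> j-1 \<longrightarrow> zs!k = (y@[c])!k"
    proof (intro allI impI)
      fix k assume k: "k < Suc e" "k \<noteq> j - 1"
      show "zs!k = (y@[c])!k"
      proof (cases "k < e")
        case True then show ?thesis using q2 k q(2) lq jy(2-4) by (simp add: nth_append)
      next
        case False then have "k = e" using k by simp
        then show ?thesis using q(2) lq jy(2-4) by (simp add: nth_append)
      qed
    qed
    moreover have "length zs = Suc e" using q(2) lq by simp
    ultimately show "zs \<in> translate (Tcoord T (Suc e) j) (y@[c])" unfolding Q2 by blast
  next
    fix zs assume zs: "zs \<in> translate (Tcoord T (Suc e) j) (y@[c])"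
    then have lz: "length zs = Suc e" unfolding Q2 by auto
    then obtain q c' where qc: "zs = q @ [c']" by (cases zs rule: rev_cases) auto
    have lq: "length q = e" using lz qc by simp
    have z2: "\<forall>k<Suc e. k \<noteq> j-1 \<longrightarrow> zs!k = (y@[c])!k" using zs unfolding Q2 by blast
    have "e \<noteq> j - 1" using jy by auto
    then have "zs!e = (y@[c])!e" using z2 by blast
    then have cc: "c' = c" using qc lq jy(2-4) by (simp add: nth_append)
    have z1: "zs!(j-1) \<in> (\<lambda>t. t + (y@[c])!(j-1))`T" "\<forall>k<Suc e. k \<noteq> j-1 \<longrightarrow> zs!k = (y@[c])!k"
      using zs unfolding Q2 by auto
    have jl: "j - 1 < e" "j - 1 < length y" using jy by auto
    have "q!(j-1) \<in> (\<lambda>t. t + y!(j-1))`T"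
      using z1(1) qc lq jl by (simp add: nth_append)
    moreover have "\<forall>k<e. k \<noteq> j-1 \<longrightarrow> q!k = y!k"
    proof (intro allI impI)
      fix k assume "k < e" "k \<noteq> j - 1"
      then have "zs!k = (y@[c])!k" using z1(2) by auto
      then show "q!k = y!k" using qc lq jy(2-4) \<open>k < e\<close> by (simp add: nth_append)
    qed
    ultimately have "q \<in> Q" unfolding Q using lq by auto
    then show "zs \<in> (\<lambda>q. q @ [c]) ` Q" using qc cc by auto
  qed
  then show ?thesis unfolding copies_def
    apply (rule ssubst)
    apply (rule CollectI, rule exI[of _ j], rule exI[of _ "y@[c]"])
    using jy(2-4) by simp
qed

lemma tilable_ext:
  assumes "tilable T e F"
  shows "tilable T (Suc e) (ext F W)"
proof -
  obtain P where P: "P \<subseteq> copies T e" "pairwise disjnt P" "\<Union>P = F" using assms unfolding tilable_def by auto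
  let ?P = "(\<lambda>(Q,c). (\<lambda>q. q @ [c]) ` Q) ` (P \<times> W)"
  have h1: "?P \<subseteq> copies T (Suc e)"
  proof
    fix R assume "R \<in> ?P"
    then obtain Q c where "R = (\<lambda>q. q @ [c]) ` Q" "Q \<in> P" "c \<in> W" by auto
    then show "R \<in> copies T (Suc e)" using copy_ext[of Q T e c W] P(1) by auto
  qed
  have h2: "pairwise disjnt ?P"
  proof (rule pairwiseI)
    fix a b assume "a \<in> ?P" "b \<in> ?P" "a \<noteq> b"
    obtain Qa where "Qa \<in> P \<times> W" "a = (\<lambda>(Q,c). (\<lambda>q. q @ [c]) ` Q) Qa" using \<open>a \<in> ?P\<close> by (rule imageE)
    then obtain Q c where a: "a = (\<lambda>q. q @ [c]) ` Q" "Q \<in> P" by (cases Qa) auto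
    obtain Qb where "Qb \<in> P \<times> W" "b = (\<lambda>(Q,c). (\<lambda>q. q @ [c]) ` Q) Qb" using \<open>b \<in> ?P\<close> by (rule imageE)
    then obtain Q' c' where b: "b = (\<lambda>q. q @ [c']) ` Q'" "Q' \<in> P" by (cases Qb) auto
    show "disjnt a b"
    proof (rule ccontr)
      assume "\<not> disjnt a b"
      then obtain zs where "zs \<in> a" "zs \<in> b" unfolding disjnt_def by blast
      obtain q where "q \<in> Q" "zs = q @ [c]" using \<open>zs \<in> a\<close> a(1) by blast
      obtain q' where "q' \<in> Q'" "zs = q' @ [c']" using \<open>zs \<in> b\<close> b(1) by blast
      have "q = q'" "c = c'" using \<open>zs = q @ [c]\<close> \<open>zs = q' @ [c']\<close> by simp_all
      have "Q \<noteq> Q'"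
      proof
        assume "Q = Q'"
        then have "a = b" unfolding a(1) b(1) using \<open>c = c'\<close> by simp
        then show False using \<open>a \<noteq> b\<close> by simp
      qed
      then have "disjnt Q Q'" using P(2) a(2) b(2) unfolding pairwise_def by blast
      then show False using \<open>q \<in> Q\<close> \<open>q' \<in> Q'\<close> \<open>q = q'\<close> unfolding disjnt_def by auto
    qed
  qed
  have h3: "\<Union>?P = ext F W"
  proof (intro equalityI subsetI)
    fix zs assume "zs \<in> \<Union>?P"
    then obtain Q c q where "Q \<in> P" "c \<in> W" "q \<in> Q" "zs = q @ [c]" by auto
    then show "zs \<in> ext F W" unfolding ext_def using P(3) by blast
  next
    fix zs assume "zs \<in> ext F W"
    then obtain q c where "q \<in> F" "c \<in> W" "zs = q @ [c]" unfolding ext_def by blast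
    then obtain Q where "Q \<in> P" "q \<in> Q" using P(3) by blast
    then have "zs \<in> (\<lambda>(Q,c). (\<lambda>q. q @ [c]) ` Q) (Q, c)" using \<open>zs = q @ [c]\<close> by simp
    moreover have "(Q, c) \<in> P \<times> W" using \<open>Q \<in> P\<close> \<open>c \<in> W\<close> by simp
    ultimately show "zs \<in> \<Union>?P" by blast
  qed
  show ?thesis unfolding tilable_def using h1 h2 h3 by (intro exI[of _ ?P] conjI)
qed




lemma atomsT: "T = Cdown T x \<union> (T \<inter> Tup T x)" by (auto simp: Cdown_def)
lemma atomsTu: "Tup T x = (T \<inter> Tup T x) \<union> Cup T x" by (auto simp: Cup_def)
lemma atomsA: "Aset T x = Cdown T x \<union> (T \<inter> Tup T x) \<union> Cup T x" by (auto simp: Cup_def Cdown_def Aset_def)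
lemma disjDU: "Cdown T x \<inter> Cup T x = {}" by (auto simp: Cup_def Cdown_def)
lemma disjDM: "Cdown T x \<inter> (T \<inter> Tup T x) = {}" by (auto simp: Cdown_def)
lemma disjMU: "(T \<inter> Tup T x) \<inter> Cup T x = {}" by (auto simp: Cup_def)

lemma Cset_len: "xs \<in> Cset T x i e \<Longrightarrow> length xs = e" by (simp add: Cset_def)

lemma Cset_nth: "xs \<in> Cset T x i e \<longleftrightarrow> length xs = e \<and> (\<forall>k<e. xs ! k \<in> (if k + 1 = i then Cup T x else Cdown T x))"
  by (simp add: Cset_def)

lemma Cset_snoc0:
  "ys @ [t] \<in> Cset T x i (Suc e) \<longleftrightarrow> length ys = e \<and> (\<forall>k<e. ys!k \<in> (if k + 1 = i then Cup T x else Cdown T x)) \<and> t \<in> (if Suc e = i then Cup T x else Cdown T x)"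
proof -
  have "ys @ [t] \<in> Cset T x i (Suc e) \<longleftrightarrow> length ys = e \<and> (\<forall>k<Suc e. (ys@[t]) ! k \<in> (if k + 1 = i then Cup T x else Cdown T x))"
    by (simp add: Cset_def)
  also have "\<dots> \<longleftrightarrow> length ys = e \<and> (\<forall>k<e. ys!k \<in> (if k + 1 = i then Cup T x else Cdown T x)) \<and> t \<in> (if Suc e = i then Cup T x else Cdown T x)"
  proof (cases "length ys = e")
    case True
    have "(\<forall>k<Suc e. (ys@[t]) ! k \<in> (if k + 1 = i then Cup T x else Cdown T x)) \<longleftrightarrow>
      (\<forall>k<e. (ys@[t]) ! k \<in> (if k + 1 = i then Cup T x else Cdown T x)) \<and> (ys@[t]) ! e \<in> (if e + 1 = i then Cup T x else Cdown T x)"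
      by (simp add: All_less_Suc conj_commute)
    also have "(\<forall>k<e. (ys@[t]) ! k \<in> (if k + 1 = i then Cup T x else Cdown T x)) \<longleftrightarrow> (\<forall>k<e. ys ! k \<in> (if k + 1 = i then Cup T x else Cdown T x))"
      using True by (simp add: nth_append)
    also have "(ys@[t]) ! e = t" using True by (metis nth_append_length)
    finally show ?thesis using True by simp
  qed simp
  finally show ?thesis .
qed

lemma Cset_snoc:
  assumes "i \<le> Suc e"
  shows "ys @ [t] \<in> Cset T x i (Suc e) \<longleftrightarrow> (if i = Suc e then ys \<in> Cset T x 0 e \<and> t \<in> Cup T x else ys \<in> Cset T x i e \<and> t \<in> Cdown T x)"
proof (cases "i = Suc e")
  case True
  have "(\<forall>k<e. ys!k \<in> (if k + 1 = i then Cup T x else Cdown T x)) \<longleftrightarrow> (\<forall>k<e. ys!k \<in> Cdown T x)"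
    using True by auto
  then have "ys @ [t] \<in> Cset T x i (Suc e) \<longleftrightarrow> length ys = e \<and> (\<forall>k<e. ys!k \<in> Cdown T x) \<and> t \<in> Cup T x"
    using Cset_snoc0[of ys t T x i e] True by simp
  moreover have "ys \<in> Cset T x 0 e \<longleftrightarrow> length ys = e \<and> (\<forall>k<e. ys!k \<in> Cdown T x)"
    using Cset_nth[of ys T x 0 e] by simp
  ultimately show ?thesis using True by simp
next
  case False
  then have "ys @ [t] \<in> Cset T x i (Suc e) \<longleftrightarrow> length ys = e \<and> (\<forall>k<e. ys!k \<in> (if k + 1 = i then Cup T x else Cdown T x)) \<and> t \<in> Cdown T x"
    using Cset_snoc0[of ys t T x i e] by simp
  then show ?thesis using Cset_nth[of ys T x i e] False by simp
qed

lemma cpow_snoc: "ys @ [t] \<in> cpow S (Suc e) \<longleftrightarrow> ys \<in> cpow S e \<and> t \<in> S"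
  by (auto simp: cpow_def)

lemma snoc_ex: "length xs = Suc e \<Longrightarrow> \<exists>ys t. xs = ys @ [t] \<and> length ys = e"
  by (cases xs rule: rev_cases) auto

lemma ext_Cset:
  assumes "j \<le> e"
  shows "ext (Cset T x j e) (Cdown T x) = Cset T x j (Suc e)"
proof (intro equalityI subsetI)
  fix xs assume "xs \<in> ext (Cset T x j e) (Cdown T x)"
  then obtain ys t where "xs = ys @ [t]" "ys \<in> Cset T x j e" "t \<in> Cdown T x" unfolding ext_def by blast
  then show "xs \<in> Cset T x j (Suc e)" using Cset_snoc[of j e ys t T x] assms by simp
next
  fix xs assume xs: "xs \<in> Cset T x j (Suc e)"
  then obtain ys t where yt: "xs = ys @ [t]" using snoc_ex Cset_len by blast
  then have "ys \<in> Cset T x j e" "t \<in> Cdown T x" using Cset_snoc[of j e ys t T x] assms xs by simp_all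
  then show "xs \<in> ext (Cset T x j e) (Cdown T x)" unfolding ext_def using yt by blast
qed

lemma Cset_sub: "Cset T x i e \<subseteq> cpow (Aset T x) e"
  unfolding Cset_def cpow_def Aset_def Cup_def Cdown_def
  by (auto simp: in_set_conv_nth split: if_splits)

lemma Cset_disj:
  assumes "i \<noteq> i'" "i \<le> e" "i' \<le> e"
  shows "Cset T x i e \<inter> Cset T x i' e = {}"
proof (rule ccontr)
  assume "Cset T x i e \<inter> Cset T x i' e \<noteq> {}"
  then obtain xs where a: "xs \<in> Cset T x i e" and b: "xs \<in> Cset T x i' e" by blast
  have "\<exists>k<e. (k + 1 = i \<and> k + 1 \<noteq> i') \<or> (k + 1 = i' \<and> k + 1 \<noteq> i)"
  proof (cases "i = 0")
    case True then show ?thesis using assms by (intro exI[of _ "i' - 1"]) auto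
  next
    case False then show ?thesis using assms by (intro exI[of _ "i - 1"]) auto
  qed
  then obtain k where k: "k < e" "(k + 1 = i \<and> k + 1 \<noteq> i') \<or> (k + 1 = i' \<and> k + 1 \<noteq> i)" by blast
  have "xs ! k \<in> (if k + 1 = i then Cup T x else Cdown T x)" using a k(1) unfolding Cset_nth by blast
  moreover have "xs ! k \<in> (if k + 1 = i' then Cup T x else Cdown T x)" using b k(1) unfolding Cset_nth by blast
  ultimately show False using k(2) disjDU[of T x] by (auto split: if_splits)
qed

definition Rset :: "'a::ab_group_add set \<Rightarrow> 'a \<Rightarrow> nat \<Rightarrow> 'a list set" where
  "Rset T x e = {ys @ [t] | ys t. ys \<in> cpow (Aset T x) e \<and> t \<in> Tup T x \<and> \<not> (t \<in> Cup T x \<and> ys \<in> Cset T x 0 e)}"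

lemma Rset_snoc: "ys @ [t] \<in> Rset T x e \<longleftrightarrow> ys \<in> cpow (Aset T x) e \<and> t \<in> Tup T x \<and> \<not> (t \<in> Cup T x \<and> ys \<in> Cset T x 0 e)"
  unfolding Rset_def by blast

lemma ext_snoc: "ys @ [t] \<in> ext S W \<longleftrightarrow> ys \<in> S \<and> t \<in> W"
  unfolding ext_def by blast

lemma dagger_snoc: "ys @ [t] \<in> dagger T x e X \<longleftrightarrow> (ys \<in> X \<and> t \<in> Cdown T x) \<or> (ys \<in> Cset T x 0 e \<and> t \<in> Cup T x)"
proof -
  have "ys @ [t] \<in> Cset T x (e+1) (e+1) \<longleftrightarrow> ys \<in> Cset T x 0 e \<and> t \<in> Cup T x"
    using Cset_snoc[of "Suc e" e ys t T x] by simp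
  moreover have "ys @ [t] \<in> {xs @ [c] | xs c. xs \<in> X \<and> c \<in> Cdown T x} \<longleftrightarrow> ys \<in> X \<and> t \<in> Cdown T x" by blast
  ultimately show ?thesis unfolding dagger_def by blast
qed

lemma dagger_sub:
  assumes "X \<subseteq> cpow (Aset T x) e"
  shows "dagger T x e X \<subseteq> cpow (Aset T x) (Suc e)"
proof
  fix xs assume xs: "xs \<in> dagger T x e X"
  have "length xs = Suc e"
    using xs assms unfolding dagger_def cpow_def Cset_def by auto
  then obtain ys t where yt: "xs = ys @ [t]" using snoc_ex by blast
  then have "(ys \<in> X \<and> t \<in> Cdown T x) \<or> (ys \<in> Cset T x 0 e \<and> t \<in> Cup T x)" using xs dagger_snoc by metis
  moreover have "Cdown T x \<subseteq> Aset T x" "Cup T x \<subseteq> Aset T x" using atomsA[of T x] by auto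
  ultimately show "xs \<in> cpow (Aset T x) (Suc e)" unfolding yt cpow_snoc using assms Cset_sub by blast
qed

lemma dagger_comp:
  assumes "X \<subseteq> cpow (Aset T x) e"
  shows "cpow (Aset T x) (Suc e) - dagger T x e X = ext (cpow (Aset T x) e - X) (Cdown T x) \<union> Rset T x e"
proof (intro equalityI subsetI)
  fix xs assume xs: "xs \<in> cpow (Aset T x) (Suc e) - dagger T x e X"
  then have "length xs = Suc e" unfolding cpow_def by auto
  then obtain ys t where yt: "xs = ys @ [t]" using snoc_ex by blast
  have x1: "ys @ [t] \<in> cpow (Aset T x) (Suc e)" "ys @ [t] \<notin> dagger T x e X" using xs yt by auto
  have h: "ys \<in> cpow (Aset T x) e" "t \<in> Aset T x" "\<not> (ys \<in> X \<and> t \<in> Cdown T x)" "\<not> (ys \<in> Cset T x 0 e \<and> t \<in> Cup T x)"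
    using x1 cpow_snoc[of ys t "Aset T x" e] dagger_snoc[of ys t T x e X] by auto
  have "t \<in> Cdown T x \<or> t \<in> Tup T x" using h(2) atomsA[of T x] atomsTu[of T x] by blast
  then show "xs \<in> ext (cpow (Aset T x) e - X) (Cdown T x) \<union> Rset T x e"
    unfolding yt ext_snoc Rset_snoc Un_iff using h by blast
next
  fix xs assume xs: "xs \<in> ext (cpow (Aset T x) e - X) (Cdown T x) \<union> Rset T x e"
  then obtain ys t where yt: "xs = ys @ [t]" unfolding ext_def Rset_def by blast
  have dd: "Cdown T x \<inter> Tup T x = {}" "Cdown T x \<subseteq> Aset T x" "Tup T x \<subseteq> Aset T x" "Cup T x \<subseteq> Tup T x"
    using atomsA[of T x] atomsTu[of T x] disjDU[of T x] disjDM[of T x] by blast+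
  from xs have "(ys \<in> cpow (Aset T x) e - X \<and> t \<in> Cdown T x) \<or> (ys \<in> cpow (Aset T x) e \<and> t \<in> Tup T x \<and> \<not> (t \<in> Cup T x \<and> ys \<in> Cset T x 0 e))"
    unfolding yt ext_snoc Rset_snoc Un_iff by blast
  then show "xs \<in> cpow (Aset T x) (Suc e) - dagger T x e X"
    unfolding yt cpow_snoc dagger_snoc Diff_iff using dd disjDU[of T x] by blast
qed




lemma cpow_nth: "ys \<in> cpow S e \<longleftrightarrow> length ys = e \<and> (\<forall>k<e. ys!k \<in> S)"
  unfolding cpow_def subset_eq mem_Collect_eq by (auto simp: all_set_conv_all_nth)

lemma Rset_len: "xs \<in> Rset T x e \<Longrightarrow> length xs = Suc e"
  unfolding Rset_def cpow_def by auto

lemma Rset_nth: "xs \<in> Rset T x e \<longleftrightarrow> length xs = Suc e \<and> (\<forall>k<e. xs!k \<in> Aset T x) \<and> xs!e \<in> Tup T x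
   \<and> \<not> (xs!e \<in> Cup T x \<and> (\<forall>k<e. xs!k \<in> Cdown T x))"
proof (cases "length xs = Suc e")
  case True
  then obtain ys t where yt: "xs = ys @ [t]" "length ys = e" using snoc_ex by blast
  have a: "\<forall>k<e. xs!k = ys!k" using yt by (simp add: nth_append)
  have b: "xs!e = t" using yt by (metis nth_append_length)
  have "xs \<in> Rset T x e \<longleftrightarrow> ys \<in> cpow (Aset T x) e \<and> t \<in> Tup T x \<and> \<not> (t \<in> Cup T x \<and> ys \<in> Cset T x 0 e)"
    using yt(1) Rset_snoc by metis
  also have "\<dots> \<longleftrightarrow> (\<forall>k<e. ys!k \<in> Aset T x) \<and> t \<in> Tup T x \<and> \<not> (t \<in> Cup T x \<and> (\<forall>k<e. ys!k \<in> Cdown T x))"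
    using yt(2) by (simp add: cpow_nth Cset_nth)
  finally show ?thesis using a b True by simp
next
  case False then show ?thesis using Rset_len by blast
qed

lemma split_p: "p < e \<Longrightarrow> (\<forall>k<e. P k) \<longleftrightarrow> (\<forall>k<e. k \<noteq> p \<longrightarrow> P k) \<and> P p"
  by auto

lemma agree_lt: "\<forall>k<Suc e. k \<noteq> e \<longrightarrow> xs!k = ys!k \<Longrightarrow> \<forall>k<e. xs!k = ys!k"
  by auto

lemma RC0: "tilable T (Suc e) (Cset T x 0 (Suc e) \<union> Rset T x e)"
proof -
  define S1 where "S1 = {xs. length xs = Suc e \<and> ((\<forall>k<e. xs!k \<in> Aset T x) \<and> \<not> (\<forall>k<e. xs!k \<in> Cdown T x)) \<and> xs!e \<in> (\<lambda>t. t+x)`T}"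
  define S2 where "S2 = {xs. length xs = Suc e \<and> (\<forall>k<e. xs!k \<in> Cdown T x) \<and> xs!e \<in> (\<lambda>t. t+0)`T}"
  have t1: "tilable T (Suc e) S1" unfolding S1_def
  proof (rule line_tilable)
    fix xs ys :: "'a list"
    assume "\<forall>k<Suc e. k \<noteq> e \<longrightarrow> xs!k = ys!k" "(\<forall>k<e. xs!k \<in> Aset T x) \<and> \<not> (\<forall>k<e. xs!k \<in> Cdown T x)"
    then have h: "\<forall>k<e. xs!k = ys!k" "(\<forall>k<e. xs!k \<in> Aset T x)" "\<not> (\<forall>k<e. xs!k \<in> Cdown T x)" using agree_lt[of e xs ys] by blast+
    then show "(\<forall>k<e. ys!k \<in> Aset T x) \<and> \<not> (\<forall>k<e. ys!k \<in> Cdown T x)" by auto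
  qed simp
  have t2: "tilable T (Suc e) S2" unfolding S2_def
  proof (rule line_tilable)
    fix xs ys :: "'a list"
    assume "\<forall>k<Suc e. k \<noteq> e \<longrightarrow> xs!k = ys!k" "(\<forall>k<e. xs!k \<in> Cdown T x)"
    then have h: "\<forall>k<e. xs!k = ys!k" "(\<forall>k<e. xs!k \<in> Cdown T x)" using agree_lt[of e xs ys] by blast+
    then show "(\<forall>k<e. ys!k \<in> Cdown T x)" by auto
  qed simp
  have d: "S1 \<inter> S2 = {}" unfolding S1_def S2_def by blast
  have eq: "Cset T x 0 (Suc e) \<union> Rset T x e = S1 \<union> S2"
  proof (intro set_eqI)
    fix xs
    let ?P = "\<forall>k<e. xs!k \<in> Cdown T x"
    let ?Q = "\<forall>k<e. xs!k \<in> Aset T x"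
    have PQ: "?P \<longrightarrow> ?Q" using atomsA[of T x] by blast
    have c: "xs \<in> Cset T x 0 (Suc e) \<longleftrightarrow> length xs = Suc e \<and> ?P \<and> xs!e \<in> Cdown T x"
      by (simp add: Cset_nth All_less_Suc conj_commute)
    have s1: "xs \<in> S1 \<longleftrightarrow> length xs = Suc e \<and> ?Q \<and> \<not> ?P \<and> xs!e \<in> Tup T x"
      unfolding S1_def Tup_def by simp
    have s2: "xs \<in> S2 \<longleftrightarrow> length xs = Suc e \<and> ?P \<and> xs!e \<in> T"
      unfolding S2_def by simp
    show "xs \<in> Cset T x 0 (Suc e) \<union> Rset T x e \<longleftrightarrow> xs \<in> S1 \<union> S2"
    proof -
      let ?v = "xs!e"
      have f1: "?v \<in> T \<longleftrightarrow> ?v \<in> Cdown T x \<or> ?v \<in> T \<inter> Tup T x" using atomsT[of T x] by blast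
      have f2: "?v \<in> Tup T x \<longleftrightarrow> ?v \<in> T \<inter> Tup T x \<or> ?v \<in> Cup T x" using atomsTu[of T x] by blast
      have f3: "\<not> (?v \<in> Cdown T x \<and> ?v \<in> Cup T x)" using disjDU[of T x] by blast
      have f4: "\<not> (?v \<in> Cdown T x \<and> ?v \<in> T \<inter> Tup T x)" using disjDM[of T x] by blast
      have f5: "\<not> (?v \<in> T \<inter> Tup T x \<and> ?v \<in> Cup T x)" using disjMU[of T x] by blast
      show ?thesis unfolding Un_iff c s1 s2 Rset_nth using PQ f1 f2 f3 f4 f5 by argo
    qed
  qed
  show ?thesis unfolding eq using tilable_Un[OF t1 t2 d] .
qed




lemma agree_lt2: "\<forall>k<Suc e. k \<noteq> e \<longrightarrow> xs!k = ys!k \<Longrightarrow> \<forall>k<e. k \<noteq> p \<longrightarrow> xs!k = ys!k"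
  by auto

lemma agree_p: "p < e \<Longrightarrow> \<forall>k<Suc e. k \<noteq> p \<longrightarrow> xs!k = ys!k \<Longrightarrow> (\<forall>k<e. k \<noteq> p \<longrightarrow> xs!k = ys!k) \<and> xs!e = ys!e"
  by auto

lemma RCj:
  assumes "p < e"
  shows "tilable T (Suc e) (Cset T x (Suc p) (Suc e) \<union> Rset T x e)"
proof -
  define Oc where "Oc = (\<lambda>xs::'a list. \<forall>k<e. k \<noteq> p \<longrightarrow> xs!k \<in> Cdown T x)"
  have Oinv: "Oc xs = Oc ys" if "\<forall>k<e. k \<noteq> p \<longrightarrow> xs!k = ys!k" for xs ys
    unfolding Oc_def using that by auto
  define S1 where "S1 = {xs. length xs = Suc e \<and> ((\<forall>k<e. xs!k \<in> Aset T x) \<and> \<not> Oc xs) \<and> xs!e \<in> (\<lambda>t. t+x)`T}"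
  define S2 where "S2 = {xs. length xs = Suc e \<and> (Oc xs \<and> xs!e \<in> T \<inter> Tup T x) \<and> xs!p \<in> (\<lambda>t. t+0)`T}"
  define S3 where "S3 = {xs. length xs = Suc e \<and> (Oc xs \<and> xs!e \<in> Cup T x) \<and> xs!p \<in> (\<lambda>t. t+x)`T}"
  define S4 where "S4 = {xs. length xs = Suc e \<and> (Oc xs \<and> xs!p \<in> Cup T x) \<and> xs!e \<in> (\<lambda>t. t+0)`T}"
  have t1: "tilable T (Suc e) S1" unfolding S1_def
  proof (rule line_tilable)
    fix xs ys :: "'a list"
    assume a: "\<forall>k<Suc e. k \<noteq> e \<longrightarrow> xs!k = ys!k" "(\<forall>k<e. xs!k \<in> Aset T x) \<and> \<not> Oc xs"
    have h: "\<forall>k<e. xs!k = ys!k" using agree_lt[OF a(1)] .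
    have "Oc xs = Oc ys" using Oinv h by blast
    then show "(\<forall>k<e. ys!k \<in> Aset T x) \<and> \<not> Oc ys" using a(2) h by auto
  qed simp
  have t4: "tilable T (Suc e) S4" unfolding S4_def
  proof (rule line_tilable)
    fix xs ys :: "'a list"
    assume a: "\<forall>k<Suc e. k \<noteq> e \<longrightarrow> xs!k = ys!k" "Oc xs \<and> xs!p \<in> Cup T x"
    have h: "\<forall>k<e. xs!k = ys!k" using agree_lt[OF a(1)] .
    have "Oc xs = Oc ys" using Oinv h by blast
    moreover have "xs!p = ys!p" using h assms by blast
    ultimately show "Oc ys \<and> ys!p \<in> Cup T x" using a(2) by simp
  qed simp
  have t2: "tilable T (Suc e) S2" unfolding S2_def
  proof (rule line_tilable)
    fix xs ys :: "'a list"
    assume a: "\<forall>k<Suc e. k \<noteq> p \<longrightarrow> xs!k = ys!k" "Oc xs \<and> xs!e \<in> T \<inter> Tup T x"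
    have h: "(\<forall>k<e. k \<noteq> p \<longrightarrow> xs!k = ys!k) \<and> xs!e = ys!e" using agree_p[OF assms a(1)] .
    have "Oc xs = Oc ys" using Oinv h by blast
    then show "Oc ys \<and> ys!e \<in> T \<inter> Tup T x" using a(2) h by simp
  qed (use assms in simp)
  have t3: "tilable T (Suc e) S3" unfolding S3_def
  proof (rule line_tilable)
    fix xs ys :: "'a list"
    assume a: "\<forall>k<Suc e. k \<noteq> p \<longrightarrow> xs!k = ys!k" "Oc xs \<and> xs!e \<in> Cup T x"
    have h: "(\<forall>k<e. k \<noteq> p \<longrightarrow> xs!k = ys!k) \<and> xs!e = ys!e" using agree_p[OF assms a(1)] .
    have "Oc xs = Oc ys" using Oinv h by blast
    then show "Oc ys \<and> ys!e \<in> Cup T x" using a(2) h by simp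
  qed (use assms in simp)
  have memb: "((xs \<in> Cset T x (Suc p) (Suc e) \<union> Rset T x e) \<longleftrightarrow> (xs \<in> S1 \<or> xs \<in> S2 \<or> xs \<in> S3 \<or> xs \<in> S4))
     \<and> \<not> (xs \<in> S1 \<and> xs \<in> S2) \<and> \<not> (xs \<in> S1 \<and> xs \<in> S3) \<and> \<not> (xs \<in> S1 \<and> xs \<in> S4)
     \<and> \<not> (xs \<in> S2 \<and> xs \<in> S3) \<and> \<not> (xs \<in> S2 \<and> xs \<in> S4) \<and> \<not> (xs \<in> S3 \<and> xs \<in> S4)" for xs
  proof -
    let ?u = "xs!p" and ?v = "xs!e" and ?O = "Oc xs" and ?L = "length xs = Suc e"
    let ?P = "\<forall>k<e. xs!k \<in> Cdown T x"
    let ?Q = "\<forall>k<e. xs!k \<in> Aset T x"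
    have hP: "?P \<longleftrightarrow> ?O \<and> ?u \<in> Cdown T x" unfolding Oc_def using assms by auto
    have hQ: "?O \<longrightarrow> (?Q \<longleftrightarrow> ?u \<in> Aset T x)" unfolding Oc_def using assms atomsA[of T x] by auto
    have c: "xs \<in> Cset T x (Suc p) (Suc e) \<longleftrightarrow> ?L \<and> ?O \<and> ?u \<in> Cup T x \<and> ?v \<in> Cdown T x"
    proof -
      have "xs \<in> Cset T x (Suc p) (Suc e) \<longleftrightarrow> ?L \<and> (\<forall>k<e. xs!k \<in> (if k = p then Cup T x else Cdown T x)) \<and> ?v \<in> Cdown T x"
        using assms by (simp add: Cset_nth All_less_Suc conj_commute)
      moreover have "(\<forall>k<e. xs!k \<in> (if k = p then Cup T x else Cdown T x)) \<longleftrightarrow> ?O \<and> ?u \<in> Cup T x"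
        unfolding Oc_def using assms by (auto split: if_splits)
      ultimately show ?thesis by simp
    qed
    have s1: "xs \<in> S1 \<longleftrightarrow> ?L \<and> ?Q \<and> \<not> ?O \<and> ?v \<in> Tup T x" unfolding S1_def Tup_def by simp
    have s2: "xs \<in> S2 \<longleftrightarrow> ?L \<and> ?O \<and> ?v \<in> T \<inter> Tup T x \<and> ?u \<in> T" unfolding S2_def by simp
    have s3: "xs \<in> S3 \<longleftrightarrow> ?L \<and> ?O \<and> ?v \<in> Cup T x \<and> ?u \<in> Tup T x" unfolding S3_def Tup_def by simp
    have s4: "xs \<in> S4 \<longleftrightarrow> ?L \<and> ?O \<and> ?u \<in> Cup T x \<and> ?v \<in> T" unfolding S4_def by simp
    have f1: "?v \<in> T \<longleftrightarrow> ?v \<in> Cdown T x \<or> ?v \<in> T \<inter> Tup T x" using atomsT[of T x] by blast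
    have f2: "?v \<in> Tup T x \<longleftrightarrow> ?v \<in> T \<inter> Tup T x \<or> ?v \<in> Cup T x" using atomsTu[of T x] by blast
    have f3: "\<not> (?v \<in> Cdown T x \<and> ?v \<in> Cup T x)" using disjDU[of T x] by blast
    have f4: "\<not> (?v \<in> Cdown T x \<and> ?v \<in> T \<inter> Tup T x)" using disjDM[of T x] by blast
    have f5: "\<not> (?v \<in> T \<inter> Tup T x \<and> ?v \<in> Cup T x)" using disjMU[of T x] by blast
    have g1: "?u \<in> T \<longleftrightarrow> ?u \<in> Cdown T x \<or> ?u \<in> T \<inter> Tup T x" using atomsT[of T x] by blast
    have g2: "?u \<in> Tup T x \<longleftrightarrow> ?u \<in> T \<inter> Tup T x \<or> ?u \<in> Cup T x" using atomsTu[of T x] by blast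
    have g0: "?u \<in> Aset T x \<longleftrightarrow> ?u \<in> Cdown T x \<or> ?u \<in> T \<inter> Tup T x \<or> ?u \<in> Cup T x" using atomsA[of T x] by blast
    have g3: "\<not> (?u \<in> Cdown T x \<and> ?u \<in> Cup T x)" using disjDU[of T x] by blast
    have g4: "\<not> (?u \<in> Cdown T x \<and> ?u \<in> T \<inter> Tup T x)" using disjDM[of T x] by blast
    have g5: "\<not> (?u \<in> T \<inter> Tup T x \<and> ?u \<in> Cup T x)" using disjMU[of T x] by blast
    show ?thesis unfolding Un_iff c s1 s2 s3 s4 Rset_nth
      using hP hQ f1 f2 f3 f4 f5 g0 g1 g2 g3 g4 g5 by argo
  qed
  have eq: "Cset T x (Suc p) (Suc e) \<union> Rset T x e = ((S1 \<union> S2) \<union> S3) \<union> S4"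
  proof (rule set_eqI)
    fix xs show "xs \<in> Cset T x (Suc p) (Suc e) \<union> Rset T x e \<longleftrightarrow> xs \<in> ((S1 \<union> S2) \<union> S3) \<union> S4"
      using memb[of xs] unfolding Un_iff by argo
  qed
  have d1: "S1 \<inter> S2 = {}"
  proof (rule equals0I)
    fix xs assume "xs \<in> S1 \<inter> S2" then show False using memb[of xs] unfolding Int_iff by argo
  qed
  have d2: "(S1 \<union> S2) \<inter> S3 = {}"
  proof (rule equals0I)
    fix xs assume "xs \<in> (S1 \<union> S2) \<inter> S3" then show False using memb[of xs] unfolding Int_iff Un_iff by argo
  qed
  have d3: "((S1 \<union> S2) \<union> S3) \<inter> S4 = {}"
  proof (rule equals0I)
    fix xs assume "xs \<in> ((S1 \<union> S2) \<union> S3) \<inter> S4" then show False using memb[of xs] unfolding Int_iff Un_iff by argo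
  qed
  show ?thesis unfolding eq
    by (rule tilable_Un[OF tilable_Un[OF tilable_Un[OF t1 t2 d1] t3 d2] t4 d3])
qed




lemma RC:
  assumes "j \<le> e"
  shows "tilable T (Suc e) (Cset T x j (Suc e) \<union> Rset T x e)"
proof (cases j)
  case 0 then show ?thesis using RC0 by simp
next
  case (Suc p) then show ?thesis using RCj[of p e T x] assms by simp
qed

lemma dp_shift: "dagger_pow T x (Suc m) e X = dagger_pow T x m (Suc e) (dagger T x e X)"
  by (induction m) simp_all

lemma dp_sub: "X \<subseteq> cpow (Aset T x) e \<Longrightarrow> dagger_pow T x m e X \<subseteq> cpow (Aset T x) (e + m)"
proof (induction m)
  case 0 then show ?case by simp
next
  case (Suc m) then show ?case using dagger_sub[of "dagger_pow T x m e X" T x "e + m"] by simp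
qed

lemma ext_Un: "ext (S1 \<union> S2) W = ext S1 W \<union> ext S2 W" unfolding ext_def by blast
lemma ext_UN: "ext (\<Union>j\<in>J. S j) W = (\<Union>j\<in>J. ext (S j) W)" unfolding ext_def by blast
lemma ext_Int: "ext S1 W \<inter> ext S2 W = ext (S1 \<inter> S2) W" unfolding ext_def by blast
lemma ext_empty: "ext {} W = {}" unfolding ext_def by blast

lemma ext_R_disj: "ext S (Cdown T x) \<inter> Rset T x e = {}"
proof (rule equals0I)
  fix xs assume "xs \<in> ext S (Cdown T x) \<inter> Rset T x e"
  then obtain ys t where "xs = ys @ [t]" "t \<in> Cdown T x" "ys @ [t] \<in> Rset T x e" unfolding ext_def by blast
  then have "t \<in> Tup T x" "t \<in> Cdown T x" using Rset_snoc by blast+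
  then show False by (simp add: Cdown_def)
qed

lemma main:
  "\<And>e X F. X \<subseteq> cpow (Aset T x) e \<Longrightarrow> tilable T e F \<Longrightarrow> distinct js \<Longrightarrow> \<forall>j\<in>set js. j \<le> e \<Longrightarrow>
     F \<inter> (\<Union>j\<in>set js. Cset T x j e) = {} \<Longrightarrow> cpow (Aset T x) e - X = F \<union> (\<Union>j\<in>set js. Cset T x j e) \<Longrightarrow>
     tilable T (e + length js) (cpow (Aset T x) (e + length js) - dagger_pow T x (length js) e X)"
proof (induction js)
  case Nil then show ?case by simp
next
  case (Cons j js e X F)
  define X' where "X' = dagger T x e X"
  define F' where "F' = ext F (Cdown T x) \<union> (Cset T x j (Suc e) \<union> Rset T x e)"
  have je: "j \<le> e" using Cons.prems(4) by simp
  have jse: "\<forall>j'\<in>set js. j' \<le> e" using Cons.prems(4) by simp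
  have X'sub: "X' \<subseteq> cpow (Aset T x) (Suc e)" unfolding X'_def using dagger_sub Cons.prems(1) by blast
  have CE: "\<And>j'. j' \<le> e \<Longrightarrow> Cset T x j' (Suc e) = ext (Cset T x j' e) (Cdown T x)" using ext_Cset by metis
  have FC: "F \<inter> Cset T x j' e = {}" if "j' \<in> set (j # js)" for j'
    using Cons.prems(5) that by blast
  have d0: "ext F (Cdown T x) \<inter> (Cset T x j (Suc e) \<union> Rset T x e) = {}"
  proof -
    have "ext F (Cdown T x) \<inter> Cset T x j (Suc e) = {}"
      using CE[OF je] ext_Int[of F "Cdown T x" "Cset T x j e"] FC[of j] ext_empty by simp
    then show ?thesis using ext_R_disj[of F T x e] by blast
  qed
  have tF': "tilable T (Suc e) F'" unfolding F'_def
    by (rule tilable_Un[OF tilable_ext[OF Cons.prems(2)] RC[OF je] d0])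
  have dist: "distinct js" "j \<notin> set js" using Cons.prems(3) by simp_all
  have jse': "\<forall>j'\<in>set js. j' \<le> Suc e" using jse by auto
  have d1: "F' \<inter> (\<Union>j'\<in>set js. Cset T x j' (Suc e)) = {}"
  proof -
    have "ext F (Cdown T x) \<inter> Cset T x j' (Suc e) = {}" if "j' \<in> set js" for j'
      using CE[of j'] jse that ext_Int[of F "Cdown T x" "Cset T x j' e"] FC[of j'] ext_empty by simp
    moreover have "Cset T x j (Suc e) \<inter> Cset T x j' (Suc e) = {}" if "j' \<in> set js" for j'
    proof -
      have "j \<noteq> j'" using that dist(2) by blast
      moreover have "j' \<le> Suc e" using jse that by auto
      ultimately show ?thesis using Cset_disj[of j j' "Suc e" T x] je by simp
    qed
    moreover have "Rset T x e \<inter> Cset T x j' (Suc e) = {}" if "j' \<in> set js" for j'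
      using CE[of j'] jse that ext_R_disj[of "Cset T x j' e" T x e] by auto
    ultimately show ?thesis unfolding F'_def by blast
  qed
  have eq: "cpow (Aset T x) (Suc e) - X' = F' \<union> (\<Union>j'\<in>set js. Cset T x j' (Suc e))"
  proof -
    have "cpow (Aset T x) (Suc e) - X' = ext (cpow (Aset T x) e - X) (Cdown T x) \<union> Rset T x e"
      unfolding X'_def using dagger_comp Cons.prems(1) by blast
    also have "\<dots> = ext F (Cdown T x) \<union> ext (Cset T x j e) (Cdown T x) \<union> (\<Union>j'\<in>set js. ext (Cset T x j' e) (Cdown T x)) \<union> Rset T x e"
      unfolding Cons.prems(6) ext_Un ext_UN by (simp add: Un_assoc)
    also have "(\<Union>j'\<in>set js. ext (Cset T x j' e) (Cdown T x)) = (\<Union>j'\<in>set js. Cset T x j' (Suc e))"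
      using CE jse by simp
    also have "ext (Cset T x j e) (Cdown T x) = Cset T x j (Suc e)" using CE[OF je] by simp
    finally show ?thesis unfolding F'_def by blast
  qed
  have "tilable T (Suc e + length js) (cpow (Aset T x) (Suc e + length js) - dagger_pow T x (length js) (Suc e) X')"
    using Cons.IH[OF X'sub tF' dist(1) jse' d1 eq] .
  then show ?case unfolding X'_def using dp_shift[of T x "length js" e X] by simp
qed

theorem corollary12:
  fixes T :: "'a::{ab_group_add, finite} set" and x :: 'a
    and d :: nat and "is" :: "nat list"
  assumes "T \<noteq> {}" and "T \<noteq> UNIV"
    and "Tup T x \<noteq> T"
    and "d \<ge> 1"
    and "is \<noteq> []" and "distinct is" and "\<forall>i\<in>set is. i \<le> d"
  shows "hole T x (d + length is)
           (dagger_pow T x (length is) d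
              (cpow (Aset T x) d - (\<Union>i\<in>set is. Cset T x i d)))"
proof -
  let ?X = "cpow (Aset T x) d - (\<Union>i\<in>set is. Cset T x i d)"
  have Xs: "?X \<subseteq> cpow (Aset T x) d" by blast
  have e1: "cpow (Aset T x) d - ?X = {} \<union> (\<Union>i\<in>set is. Cset T x i d)"
    using Cset_sub[of T x _ d] by blast
  have "tilable T (d + length is) (cpow (Aset T x) (d + length is) - dagger_pow T x (length is) d ?X)"
    by (rule main[OF Xs tilable_empty assms(6) assms(7) _ e1]) simp
  then show ?thesis unfolding hole_def using dp_sub[OF Xs] by blast
qed


end
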